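(* Let $f(z)=z+\sum_{n\ge 2}a_nz^n\in\mathcal{BT}_{\mathfrak{B}}$ and let $\Gamma_1,\Gamma_2,\Gamma_3$ be the logarithmic inverse coefficients of $f$. Then $$|H_{2,1}(F_{f^{-1}}/2)|=|\Gamma_1\Gamma_3-\Gamma_2^2|\le\frac{1}{144}.$$ The inequality is sharp, with equality for $f_2(z)=\int_0^z\sqrt{1+\tanh(t^2)}\,dt$.
   Context: $\mathbb{D}=\{z\in\mathbb{C}:|z|<1\}$. $\mathcal{S}$ is the class of univalent analytic functions $f$ on $\mathbb{D}$ normalized by $f(0)=0$, $f'(0)=1$, i.e. $f(z)=z+\sum_{n\ge2}a_nz^n$. For analytic $g,h$ on $\mathbb{D}$, $g\prec h$ means there is an analytic $\omega:\mathbb{D}\to\mathbb{D}$ with $\omega(0)=0$ and $g=h\circ\omega$. Let $\mathfrak{B}(z)=\sqrt{1+\tanh z}$ (principal branch, $\mathfrak{B}(0)=1$). The class $\mathcal{BT}_{\mathfrak{B}}$ is $\{f\in\mathcal{S}: f'(z)\prec \mathfrak{B}(z)\}$. For $f\in\mathcal{S}$ the logarithmic inverse coefficients $\Gamma_n$ are defined by $F_{f^{-1}}(w):=\log\frac{f^{-1}(w)}{w}=2\sum_{n\ge1}\Gamma_n w^n$ near $w=0$; explicitly $\Gamma_1=-\tfrac12a_2$, $\Gamma_2=-\tfrac12(a_3-\tfrac32a_2^2)$, $\Gamma_3=-\tfrac12(a_4-4a_2a_3+\tfrac{10}{3}a_2^3)$. The Hankel determinant $H_{2,1}(F_{f^{-1}}/2):=\Gamma_1\Gamma_3-\Gamma_2^2=\frac{1}{48}(13a_2^4-12a_2^2a_3-12a_3^2+12a_2a_4)$.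 *)

theory Defs
  imports "HOL-Complex_Analysis.Complex_Analysis"
begin

definition classS :: "(complex \<Rightarrow> complex) set" where
  "classS = {f. f holomorphic_on ball 0 1 \<and> inj_on f (ball 0 1) \<and> f 0 = 0 \<and> deriv f 0 = 1}"

definition subord :: "(complex \<Rightarrow> complex) \<Rightarrow> (complex \<Rightarrow> complex) \<Rightarrow> bool" where
  "subord g h \<longleftrightarrow> (\<exists>\<omega>. \<omega> holomorphic_on ball 0 1 \<and> \<omega> ` ball 0 1 \<subseteq> ball 0 1 \<and> \<omega> 0 = 0
      \<and> (\<forall>z\<in>ball 0 1. g z = h (\<omega> z)))"

definition Bfun :: "complex \<Rightarrow> complex" where
  "Bfun z = csqrt (1 + tanh z)"

definition classBT :: "(complex \<Rightarrow> complex) set" where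
  "classBT = {f \<in> classS. subord (deriv f) Bfun}"

definition coef :: "(complex \<Rightarrow> complex) \<Rightarrow> nat \<Rightarrow> complex" where
  "coef f n = (deriv ^^ n) f 0 / fact n"

definition Gamma1 :: "(complex \<Rightarrow> complex) \<Rightarrow> complex" where
  "Gamma1 f = - (1/2) * coef f 2"
definition Gamma2 :: "(complex \<Rightarrow> complex) \<Rightarrow> complex" where
  "Gamma2 f = - (1/2) * (coef f 3 - (3/2) * (coef f 2)^2)"
definition Gamma3 :: "(complex \<Rightarrow> complex) \<Rightarrow> complex" where
  "Gamma3 f = - (1/2) * (coef f 4 - 4 * coef f 2 * coef f 3 + (10/3) * (coef f 2)^3)"

definition H21inv :: "(complex \<Rightarrow> complex) \<Rightarrow> complex" where
  "H21inv f = Gamma1 f * Gamma3 f - (Gamma2 f)^2"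

definition f2 :: "complex \<Rightarrow> complex" where
  "f2 z = contour_integral (linepath 0 z) (\<lambda>t. Bfun (t^2))"

end

theory Submission
  imports Defs
begin

unbundle no vec_syntax



lemma exp_neg2_pos:
  fixes u :: complex
  assumes "norm u < 1"
  shows "Im (exp (-2*u)) = 0 \<Longrightarrow> Re (exp (-2*u)) > 0"
proof -
  assume h: "Im (exp (-2*u)) = 0"
  have "\<bar>Im u\<bar> \<le> norm u" by (rule abs_Im_le_cmod)
  hence a: "\<bar>-2 * Im u\<bar> < pi" using assms pi_gt3 by linarith
  from h have "sin (-2 * Im u) = 0" by (simp add: Im_exp)
  hence "-2 * Im u = 0" using sin_zero_pi_iff[OF a] by simp
  thus ?thesis by (simp add: Re_exp)
qed

lemma ball_facts:
  fixes u :: complex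
  assumes "norm u < 1"
  shows "cosh u \<noteq> 0" "1 + tanh u \<notin> \<real>\<^sub>\<le>\<^sub>0" "1 + tanh u = 2 / (1 + exp (-2*u))"
    "1 + exp (-2*u) \<noteq> 0"
proof -
  define v where "v = exp (-2*u)"
  have v1: "1 + v \<noteq> 0"
  proof
    assume "1 + v = 0"
    hence "v = -1" by (simp add: add_eq_0_iff)
    thus False using exp_neg2_pos[OF assms] unfolding v_def by auto
  qed
  thus "1 + exp (-2*u) \<noteq> 0" by (simp add: v_def)
  have ev: "exp u * exp u * v = 1" unfolding v_def by (simp flip: exp_add)
  have cosh: "cosh u = exp u * (1 + v) / 2"
    using ev by (simp add: cosh_def scaleR_conv_of_real exp_minus field_simps) 
  show "cosh u \<noteq> 0" using v1 by (simp add: cosh)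
  have em: "exp (-u) = exp u * v" unfolding v_def by (simp flip: exp_add)
  have eu: "exp u \<noteq> 0" by simp
  have "tanh u = (exp u * (1 - v)) / (exp u * (1 + v))"
    by (simp add: tanh_altdef em algebra_simps)
  also have "\<dots> = (1 - v) / (1 + v)" using eu by simp
  finally have t: "1 + tanh u = 2 / (1 + v)"
    using v1 by (simp add: field_simps)
  thus "1 + tanh u = 2 / (1 + exp (-2*u))" by (simp add: v_def)
  show "1 + tanh u \<notin> \<real>\<^sub>\<le>\<^sub>0"
  proof
    assume "1 + tanh u \<in> \<real>\<^sub>\<le>\<^sub>0"
    then obtain x where x: "x \<le> 0" "2 / (1 + v) = of_real x" using t by (auto elim!: nonpos_Reals_cases)
    have "x \<noteq> 0" using x v1 by auto
    hence "1 + v = of_real (2 / x)" using x v1 by (simp add: field_simps)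
    hence "Im v = 0" "Re v = 2/x - 1" by (simp_all add: complex_eq_iff)
    moreover have "2/x - 1 < 0" using x \<open>x \<noteq> 0\<close> by (simp add: divide_neg_pos)
    ultimately show False using exp_neg2_pos[OF assms] unfolding v_def by auto
  qed
qed

lemma Bfun_holo: "Bfun holomorphic_on ball 0 1"
proof -
  have "(\<lambda>z. tanh z) analytic_on ball 0 1"
    by (rule analytic_on_tanh) (use ball_facts(1) in auto)
  hence "(\<lambda>z. 1 + tanh z) holomorphic_on ball 0 1"
    by (intro holomorphic_intros analytic_imp_holomorphic)
  thus ?thesis unfolding Bfun_def[abs_def]
    by (rule holomorphic_on_csqrt') (use ball_facts(2) in auto)
qed

lemma csqrt_Re0: "Re (csqrt w) = 0 \<Longrightarrow> w \<in> \<real>\<^sub>\<le>\<^sub>0"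
proof -
  assume r: "Re (csqrt w) = 0"
  define s where "s = csqrt w"
  have w: "w = s * s" unfolding s_def by (simp flip: power2_eq_square)
  have rs: "Re s = 0" using r s_def by simp
  have "s * s = of_real (-(Im s * Im s))" using rs by (simp add: complex_eq_iff)
  moreover have "-(Im s * Im s) \<le> 0" by simp
  ultimately show ?thesis using w nonpos_Reals_of_real_iff by metis
qed

lemma Bfun_Re_pos: "norm u < 1 \<Longrightarrow> Re (Bfun u) > 0"
proof -
  assume u: "norm u < 1"
  have n: "1 + tanh u \<notin> \<real>\<^sub>\<le>\<^sub>0" using ball_facts[OF u] by blast
  have "Re (csqrt (1 + tanh u)) \<noteq> 0" using csqrt_Re0 n by blast
  hence "Re (csqrt (1 + tanh u)) > 0" using Re_csqrt[of "1 + tanh u"] by linarith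
  thus ?thesis by (simp add: Bfun_def)
qed

lemma Bfun_0: "Bfun 0 = 1" by (simp add: Bfun_def)

lemma holo_fps:
  assumes "f holomorphic_on ball 0 1"
  shows "f has_fps_expansion fps_expansion f 0"
  by (rule analytic_at_imp_has_fps_expansion_0) (use assms in \<open>auto simp: analytic_at_ball intro!: exI[of _ 1]\<close>)

lemma ev_ball: "eventually (\<lambda>z. z \<in> ball 0 (1::real)) (nhds (0::complex))"
  by (rule eventually_nhds_in_open) auto

lemma ev_ballI: "(\<And>z. z \<in> ball 0 1 \<Longrightarrow> P z) \<Longrightarrow> eventually P (nhds (0::complex))"
  using ev_ball by (auto elim!: eventually_mono)

lemma mult_nth123:
  fixes f g :: "complex fps"
  shows "(f*g)$1 = f$0*g$1 + f$1*g$0"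
    "(f*g)$2 = f$0*g$2 + f$1*g$1 + f$2*g$0"
    "(f*g)$3 = f$0*g$3 + f$1*g$2 + f$2*g$1 + f$3*g$0"
  by (simp_all add: fps_mult_nth numeral_2_eq_2 numeral_3_eq_3)

lemma tanh_fps:
  defines "T \<equiv> fps_expansion tanh 0"
  shows "tanh has_fps_expansion T" "T$0 = 0" "T$1 = 1" "T$2 = 0" "T$3 = -1/3"
proof -
  have th: "tanh analytic_on ball 0 1"
    using analytic_on_tanh[of "\<lambda>z. z" "ball 0 1"] ball_facts(1) by auto
  show tT: "tanh has_fps_expansion T" unfolding T_def
    by (rule holo_fps) (use th analytic_imp_holomorphic in auto)
  have 1: "deriv tanh has_fps_expansion fps_deriv T" by (rule has_fps_expansion_deriv[OF tT])
  have 2: "(\<lambda>z. 1 - tanh z ^ 2) has_fps_expansion 1 - T^2"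
    by (intro fps_expansion_intros tT)
  have ev: "eventually (\<lambda>z::complex. 1 - tanh z ^ 2 = deriv tanh z) (nhds 0)"
  proof (rule ev_ballI)
    fix z :: complex assume "z \<in> ball 0 1"
    hence "cosh z \<noteq> 0" using ball_facts by auto
    thus "1 - tanh z ^ 2 = deriv tanh z"
      by (intro DERIV_imp_deriv[symmetric]) (auto intro!: derivative_eq_intros)
  qed
  have "deriv tanh has_fps_expansion 1 - T^2" using has_fps_expansion_cong[OF ev refl] 2 by blast
  hence eq: "fps_deriv T = 1 - T^2" using fps_expansion_unique_complex[OF 1] by blast
  have T0: "T$0 = 0" using fps_nth_fps_expansion[OF tT, of 0] by simp
  show "T$0 = 0" by (fact T0)
  have e: "of_nat (n+1) * T$(n+1) = (1 - T^2)$n" for n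
    using arg_cong[OF eq, of "\<lambda>F. F$n"] by simp
  note e0 = e[of 0] and e1 = e[of 1] and e2 = e[of 2]
  show T1: "T$1 = 1" using e0 T0 by (simp add: power2_eq_square)
  have e1': "2 * T$2 = (1 - T^2)$1" using e1 by (simp add: numeral_2_eq_2)
  have e2': "3 * T$3 = (1 - T^2)$2" using e2 by (simp add: numeral_3_eq_3)
  show T2: "T$2 = 0" using e1' T0 T1 by (simp add: power2_eq_square mult_nth123)
  show "T$3 = -1/3" using e2' T0 T1 T2 by (simp add: power2_eq_square mult_nth123 field_simps)
qed



lemma lin_solve: "(p::complex) * x + q = r \<Longrightarrow> p \<noteq> 0 \<Longrightarrow> x = (r - q) / p"
  by (auto simp: field_simps)

lemma Bfun_fps:
  defines "B \<equiv> fps_expansion Bfun 0"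
  shows "Bfun has_fps_expansion B" "B$0 = 1" "B$1 = 1/2" "B$2 = -1/8" "B$3 = -5/48"
proof -
  show bB: "Bfun has_fps_expansion B" unfolding B_def by (rule holo_fps[OF Bfun_holo])
  obtain T :: "complex fps" where tT: "tanh has_fps_expansion T" and T: "T$0 = 0" "T$1 = 1" "T$2 = 0" "T$3 = -1/3"
    using tanh_fps by blast
  have 1: "(\<lambda>z. Bfun z * Bfun z) has_fps_expansion B * B" by (intro fps_expansion_intros bB)
  have 2: "(\<lambda>z. 1 + tanh z) has_fps_expansion 1 + T" by (intro fps_expansion_intros tT)
  have ev: "eventually (\<lambda>z. Bfun z * Bfun z = 1 + tanh z) (nhds 0)"
    by (rule always_eventually) (simp add: Bfun_def flip: power2_eq_square)
  have "(\<lambda>z. 1 + tanh z) has_fps_expansion B * B" using has_fps_expansion_cong[OF ev refl] 1 by simp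
  hence eq: "B * B = 1 + T" using fps_expansion_unique_complex[OF _ 2] by simp
  have e: "(B*B)$n = (1 + T)$n" for n using eq by simp
  have B0: "B$0 = 1" using fps_nth_fps_expansion[OF bB, of 0] by (simp add: Bfun_0)
  show "B$0 = 1" by (fact B0)
  have "B$0*B$1 + B$1*B$0 = T$1" using e[of 1] unfolding mult_nth123 by simp
  hence "2 * B$1 + 0 = 1" unfolding B0 T by simp
  from lin_solve[OF this] show B1: "B$1 = 1/2" by simp
  have "B$0*B$2 + B$1*B$1 + B$2*B$0 = T$2" using e[of 2] unfolding mult_nth123 by simp
  hence "2 * B$2 + 1/4 = 0" unfolding B0 B1 T by simp
  from lin_solve[OF this] show B2: "B$2 = -1/8" by simp
  have "B$0*B$3 + B$1*B$2 + B$2*B$1 + B$3*B$0 = T$3" using e[of 3] unfolding mult_nth123 by simp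
  hence "2 * B$3 + (- 1/8) = -1/3" unfolding B0 B1 B2 T by simp
  from lin_solve[OF this] show "B$3 = -5/48" by simp
qed


lemma real_ineq:
  fixes r s :: real
  assumes r: "0 \<le> r" "r \<le> 1" and s: "0 \<le> s" "s \<le> 1"
  shows "9/8 * (1-r^2) * r * (1 - s^2) + (1-r^2) * (1 + r^2/8) * s^2 + 7/16 * (1-r^2) * r^2 * s + 13/256 * r^4 \<le> 1"
proof -
  define k where "k = 1 - r^2"
  have k0: "0 \<le> k" unfolding k_def using r by (simp add: power_le_one)
  define A where "A = 9/8 * k * r + 13/256 * r^4"
  define B where "B = 7/16 * k * r^2"
  define C where "C = k * (1 + r^2/8 - 9/8 * r)"
  have C0: "0 \<le> C"
  proof -
    have "1 + r^2/8 - 9/8 * r = (1 - r) * (8 - r) / 8" by (simp add: power2_eq_square algebra_simps)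
    also have "\<dots> \<ge> 0" using r by simp
    finally show ?thesis unfolding C_def using k0 by simp
  qed
  have F: "9/8 * (1-r^2) * r * (1 - s^2) + (1-r^2) * (1 + r^2/8) * s^2 + 7/16 * (1-r^2) * r^2 * s + 13/256 * r^4
      = A + B * s + C * s^2"
    unfolding A_def B_def C_def k_def by (simp add: field_simps power2_eq_square)
  have ss: "s^2 \<le> s" using s by (simp add: power2_eq_square mult_left_le_one_le)
  have "C * s^2 \<le> C * s" using mult_left_mono[OF ss C0] by simp
  hence 1: "A + B * s + C * s^2 \<le> (1 - s) * A + s * (A + B + C)" by (simp add: algebra_simps)
  have r3: "r * (1 - r^2) \<le> 1/2"
  proof -
    have "r * (1 - r^2) = r * (1 - r) * (1 + r)" by (simp add: power2_eq_square algebra_simps)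
    also have "\<dots> \<le> (1/4) * 2"
    proof (rule mult_mono)
      have "0 \<le> (r - 1/2)^2" by simp
      thus "r * (1 - r) \<le> 1/4" by (simp add: power2_eq_square algebra_simps)
    qed (use r in auto)
    finally show ?thesis by simp
  qed
  have r4: "r^4 \<le> 1" using r by (simp add: power_le_one)
  have Ae: "A = 9/8 * (r * (1 - r^2)) + 13/256 * r^4" unfolding A_def k_def by (simp add: algebra_simps)
  have A1: "A \<le> 1" unfolding Ae using r3 r4 by linarith
  have ABC: "A + B + C = 1 - 7/16 * r^2 - 131/256 * r^4"
    unfolding A_def B_def C_def k_def by (simp add: field_simps power2_eq_square power4_eq_xxxx)
  have "0 \<le> r^2" "0 \<le> r^4" by simp_all
  hence ABC1: "A + B + C \<le> 1" unfolding ABC by linarith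
  have "(1 - s) * A + s * (A + B + C) \<le> (1 - s) * 1 + s * 1"
    by (intro add_mono mult_left_mono A1 ABC1) (use s in auto)
  thus ?thesis unfolding F using 1 by simp
qed

lemma norm4: "norm (x - y - z - w) \<le> norm x + norm y + norm z + norm (w::complex)"
  using norm_triangle_ineq4[of "x-y-z" w] norm_triangle_ineq4[of "x-y" z] norm_triangle_ineq4[of x y]
  by linarith

lemma nof: "0 \<le> x \<Longrightarrow> norm (of_real x * (y::complex)) = x * norm y"
  by (simp add: norm_mult)

lemma E_bound:
  fixes a c2 c3 d1 d2 :: complex
  assumes a: "norm a < 1" and d1: "norm d1 \<le> 1" and d2: "norm d2 \<le> 1 - (norm d1)^2"
    and c2: "c2 = of_real (1 - (norm a)^2) * d1"
    and c3: "c3 = of_real (1 - (norm a)^2) * d2 - cnj a * of_real (1 - (norm a)^2) * d1^2"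
  shows "norm (9/8 * a * c3 - c2^2 - 7/16 * a^2 * c2 - 13/256 * a^4) \<le> 1"
proof -
  define r where "r = norm a"
  define k where "k = 1 - r^2"
  define s where "s = norm d1"
  have r0: "0 \<le> r" "r \<le> 1" using a unfolding r_def by auto
  have k0: "0 \<le> k" unfolding k_def using r0 by (simp add: power_le_one)
  have aa: "a * cnj a = of_real (r^2)" unfolding r_def using complex_norm_square[of a] by simp
  have E: "9/8 * a * c3 - c2^2 - 7/16 * a^2 * c2 - 13/256 * a^4
     = (9/8 * of_real k) * a * d2 - of_real ((9/8 * r^2 + k) * k) * d1^2 - (7/16 * of_real k) * a^2 * d1 - 13/256 * a^4"
  proof -
    have "9/8 * a * c3 = (9/8 * of_real k) * a * d2 - 9/8 * (a * cnj a) * of_real k * d1^2"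
      unfolding c3 k_def r_def by (simp add: field_simps)
    also have "\<dots> = (9/8 * of_real k) * a * d2 - of_real (9/8 * r^2 * k) * d1^2"
      unfolding aa by simp
    finally have 1: "9/8 * a * c3 = (9/8 * of_real k) * a * d2 - of_real (9/8 * r^2 * k) * d1^2" .
    have 2: "c2^2 = of_real (k * k) * d1^2" unfolding c2 k_def r_def by (simp add: power2_eq_square algebra_simps)
    have 3: "7/16 * a^2 * c2 = (7/16 * of_real k) * a^2 * d1" unfolding c2 k_def r_def by simp
    show ?thesis unfolding 1 2 3 by (simp add: algebra_simps)
  qed
  have "norm (9/8 * a * c3 - c2^2 - 7/16 * a^2 * c2 - 13/256 * a^4)
     \<le> 9/8 * k * r * norm d2 + (9/8 * r^2 + k) * k * s^2 + 7/16 * k * r^2 * s + 13/256 * r^4"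
  proof -
    have n1: "norm ((9/8 * of_real k) * a * d2) = 9/8 * k * r * norm d2"
      using k0 by (simp add: norm_mult r_def)
    have "0 \<le> (9/8 * r^2 + k) * k" using k0 by simp
    hence n2: "norm (of_real ((9/8 * r^2 + k) * k) * d1^2) = (9/8 * r^2 + k) * k * s^2"
      unfolding s_def using nof[of "(9/8 * r^2 + k) * k" "d1^2"] by (simp add: norm_power)
    have n3: "norm ((7/16 * of_real k) * a^2 * d1) = 7/16 * k * r^2 * s"
      using k0 by (simp add: norm_mult norm_power r_def s_def)
    have n4: "norm (13/256 * a^4) = 13/256 * r^4" by (simp add: norm_mult norm_power r_def)
    show ?thesis unfolding E using norm4[of "(9/8 * of_real k) * a * d2" "of_real ((9/8 * r^2 + k) * k) * d1^2"
        "(7/16 * of_real k) * a^2 * d1" "13/256 * a^4"] unfolding n1 n2 n3 n4 .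
  qed
  also have "\<dots> \<le> 9/8 * k * r * (1 - s^2) + (9/8 * r^2 + k) * k * s^2 + 7/16 * k * r^2 * s + 13/256 * r^4"
    using mult_left_mono[OF d2, of "9/8 * k * r"] k0 r0 unfolding s_def by simp
  also have "\<dots> \<le> 1"
    using real_ineq[OF r0, of s] d1 unfolding s_def k_def by (simp add: algebra_simps)
  finally show ?thesis .
qed



lemma mobius_id: "(cmod (1 - cnj a * b))^2 - (cmod (b - a))^2 = (1 - (cmod a)^2) * (1 - (cmod b)^2)"
  unfolding cmod_power2 by (simp add: algebra_simps power2_eq_square)

lemma mobius_norm:
  assumes "norm a < 1" "norm b < 1"
  shows "1 - cnj a * b \<noteq> 0" "norm ((b - a) / (1 - cnj a * b)) < 1"
proof -
  have "0 < (1 - (cmod a)^2) * (1 - (cmod b)^2)"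
    using assms by (intro mult_pos_pos) (simp_all add: power_less_one_iff abs_square_less_1)
  hence lt: "(cmod (b - a))^2 < (cmod (1 - cnj a * b))^2" using mobius_id[of a b] by linarith
  hence lt2: "cmod (b - a) < cmod (1 - cnj a * b)" using power2_less_imp_less by fastforce
  thus "1 - cnj a * b \<noteq> 0" by auto
  thus "norm ((b - a) / (1 - cnj a * b)) < 1" using lt2 by (simp add: norm_divide divide_less_eq)
qed

lemma const_deriv0:
  fixes g :: "complex \<Rightarrow> complex"
  assumes "\<forall>z\<in>ball 0 1. g z = c"
  shows "deriv g 0 = 0"
proof -
  have "eventually (\<lambda>z. g z = c) (nhds (0::complex))"
    using assms eventually_nhds_in_open[of "ball 0 1" 0] by (auto elim!: eventually_mono)
  hence "deriv g 0 = deriv (\<lambda>_. c) 0" by (rule deriv_cong_ev) simp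
  thus ?thesis by simp
qed

lemma has_deriv_ball:
  assumes "g holomorphic_on ball 0 1" "norm z < 1"
  shows "(g has_field_derivative deriv g z) (at z)"
  using assms by (intro holomorphic_derivI[of g "ball 0 1"]) auto

lemma SP0:
  assumes holo: "g holomorphic_on ball 0 1" and le: "\<forall>z\<in>ball 0 1. norm (g z) \<le> 1"
  shows "norm (deriv g 0) \<le> 1 - (norm (g 0))^2"
proof (cases "\<exists>z\<in>ball 0 1. norm (g z) = 1")
  case True
  then obtain z where z: "z \<in> ball 0 1" "norm (g z) = 1" by blast
  have "g constant_on ball 0 1"
    by (rule maximum_modulus_principle[OF holo open_ball connected_ball open_ball order_refl z(1)])
       (use le z in auto)
  then obtain c where c: "\<forall>w\<in>ball 0 1. g w = c" unfolding constant_on_def by blast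
  have "deriv g 0 = 0" by (rule const_deriv0[OF c])
  moreover have "norm (g 0) = 1" using c z by simp
  ultimately show ?thesis by simp
next
  case False
  hence lt: "\<forall>z\<in>ball 0 1. norm (g z) < 1" using le by force
  define b where "b = g 0"
  have b: "norm b < 1" using lt unfolding b_def by simp
  define h where "h = (\<lambda>z. (g z - b) / (1 - cnj b * g z))"
  have den: "1 - cnj b * g z \<noteq> 0" if "z \<in> ball 0 1" for z
    using mobius_norm(1)[OF b, of "g z"] lt that by auto
  have hh: "h holomorphic_on ball 0 1" unfolding h_def
    by (intro holomorphic_intros holo) (use den in auto)
  have h0: "h 0 = 0" unfolding h_def b_def by simp
  have hn: "norm (h z) < 1" if "norm z < 1" for z
    unfolding h_def using mobius_norm(2)[OF b, of "g z"] lt that by auto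
  have "norm (deriv h 0) \<le> 1" using Schwarz_Lemma(2)[OF hh h0 hn, of 0] by simp
  moreover have "deriv h 0 = deriv g 0 / (1 - cnj b * b)"
  proof -
    have gd: "(g has_field_derivative deriv g 0) (at 0)" by (rule has_deriv_ball[OF holo]) simp
    have d0: "1 - cnj b * g 0 \<noteq> 0" using den[of 0] by simp
    have "(h has_field_derivative ((deriv g 0 - 0) * (1 - cnj b * g 0) - (g 0 - b) * (0 - cnj b * deriv g 0)) / ((1 - cnj b * g 0) * (1 - cnj b * g 0))) (at 0)"
      unfolding h_def by (rule DERIV_divide[OF DERIV_diff[OF gd DERIV_const] DERIV_diff[OF DERIV_const DERIV_cmult[OF gd]] d0])
    moreover have "((deriv g 0 - 0) * (1 - cnj b * g 0) - (g 0 - b) * (0 - cnj b * deriv g 0)) / ((1 - cnj b * g 0) * (1 - cnj b * g 0))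
        = deriv g 0 / (1 - cnj b * b)"
      using d0 unfolding b_def by simp
    ultimately show ?thesis using DERIV_imp_deriv by metis
  qed
  moreover have pb: "0 < 1 - (norm b)^2" using b by (simp add: power_less_one_iff abs_square_less_1)
  moreover have "norm (1 - cnj b * b) = 1 - (norm b)^2"
  proof -
    have "cnj b * b = of_real ((norm b)^2)" using complex_norm_square[of b] by (simp add: mult.commute)
    hence "1 - cnj b * b = of_real (1 - (norm b)^2)" by simp
    thus ?thesis using pb by (simp only: norm_of_real)
  qed
  ultimately have "norm (deriv g 0) / (1 - (norm b)^2) \<le> 1"
    by (simp add: norm_divide)
  with pb show ?thesis unfolding b_def by (simp add: divide_le_eq)
qed

lemma schwarz_factor:
  assumes holo: "w holomorphic_on ball 0 1" and w0: "w 0 = 0" and lt: "\<And>z. norm z < 1 \<Longrightarrow> norm (w z) < 1"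
  obtains p where "p holomorphic_on ball 0 1" "\<And>z. w z = z * p z" "\<And>z. z \<in> ball 0 1 \<Longrightarrow> norm (p z) \<le> 1"
proof -
  define p where "p = (\<lambda>z. if z = 0 then deriv w 0 else (w z - w 0) / (z - 0))"
  have ph: "p holomorphic_on ball 0 1" unfolding p_def by (rule pole_lemma_open[OF holo open_ball])
  have pe: "w z = z * p z" for z unfolding p_def using w0 by auto
  have pn: "norm (p z) \<le> 1" if "z \<in> ball 0 1" for z
  proof (cases "z = 0")
    case True
    thus ?thesis unfolding p_def using Schwarz_Lemma(2)[OF holo w0 lt, of 0] by simp
  next
    case False
    have "norm (w z) \<le> norm z" using Schwarz_Lemma(1)[OF holo w0 lt, of z] that by simp
    thus ?thesis unfolding p_def using False w0 by (simp add: norm_divide divide_le_eq)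
  qed
  show ?thesis by (rule that[OF ph pe pn])
qed



lemma compose_nth123:
  fixes a b :: "complex fps"
  assumes b0: "b$0 = 0"
  shows "(a oo b)$1 = a$1 * b$1"
    "(a oo b)$2 = a$1 * b$2 + a$2 * (b$1)^2"
    "(a oo b)$3 = a$1 * b$3 + 2 * a$2 * b$1 * b$2 + a$3 * (b$1)^3"
proof -
  have p2: "b^2 = b * b" by (simp add: power2_eq_square)
  have p3: "b^3 = b * (b * b)" by (simp add: power3_eq_cube)
  have s1: "(b^2)$1 = 0" "(b^2)$2 = (b$1)^2" "(b^2)$3 = 2 * b$1 * b$2"
    unfolding p2 mult_nth123 using b0 by (simp_all add: power2_eq_square)
  have s2: "(b^3)$1 = 0" "(b^3)$2 = 0" "(b^3)$3 = (b$1)^3"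
    unfolding p3 mult_nth123 using b0 by (simp_all add: power3_eq_cube)
  show "(a oo b)$1 = a$1 * b$1"
    by (simp add: fps_compose_nth)
  show "(a oo b)$2 = a$1 * b$2 + a$2 * (b$1)^2"
    using s1 by (simp add: fps_compose_nth numeral_2_eq_2)
  show "(a oo b)$3 = a$1 * b$3 + 2 * a$2 * b$1 * b$2 + a$3 * (b$1)^3"
    using s1 s2 by (simp add: fps_compose_nth numeral_3_eq_3 numeral_2_eq_2 algebra_simps)
qed

lemma schur_bound:
  assumes holo: "phi holomorphic_on ball 0 1" and le: "\<forall>z\<in>ball 0 1. norm (phi z) \<le> 1"
  defines "P \<equiv> fps_expansion phi 0"
  shows "norm (9/8 * P$0 * P$2 - (P$1)^2 - 7/16 * (P$0)^2 * P$1 - 13/256 * (P$0)^4) \<le> 1"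
proof -
  have hP: "phi has_fps_expansion P" unfolding P_def by (rule holo_fps[OF holo])
  have P0: "P$0 = phi 0" using fps_nth_fps_expansion[OF hP, of 0] by simp
  show ?thesis
  proof (cases "\<exists>z\<in>ball 0 1. norm (phi z) = 1")
    case True
    then obtain z where z: "z \<in> ball 0 1" "norm (phi z) = 1" by blast
    have "phi constant_on ball 0 1"
      by (rule maximum_modulus_principle[OF holo open_ball connected_ball open_ball order_refl z(1)])
         (use le z in auto)
    then obtain c where c: "\<forall>w\<in>ball 0 1. phi w = c" unfolding constant_on_def by blast
    have ev: "eventually (\<lambda>w. c = phi w) (nhds 0)" using c by (intro ev_ballI) auto
    have "phi has_fps_expansion fps_const c"
      using has_fps_expansion_cong[OF ev refl] has_fps_expansion_const[of c] by simp
    hence Pc: "P = fps_const c" using fps_expansion_unique_complex[OF hP] by simp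
    have nc: "norm c = 1" using c z by simp
    have "norm (9/8 * P$0 * P$2 - (P$1)^2 - 7/16 * (P$0)^2 * P$1 - 13/256 * (P$0)^4) = 13/256"
      unfolding Pc using nc by (simp add: norm_mult norm_power)
    thus ?thesis by simp
  next
    case False
    hence lt: "\<forall>z\<in>ball 0 1. norm (phi z) < 1" using le by force
    define a where "a = phi 0"
    have a: "norm a < 1" using lt unfolding a_def by simp
    define psi where "psi = (\<lambda>z. (phi z - a) / (1 - cnj a * phi z))"
    have den: "1 - cnj a * phi z \<noteq> 0" if "z \<in> ball 0 1" for z
      using mobius_norm(1)[OF a, of "phi z"] lt that by auto
    have psih: "psi holomorphic_on ball 0 1" unfolding psi_def
      by (intro holomorphic_intros holo) (use den in auto)
    have psi0: "psi 0 = 0" unfolding psi_def a_def by simp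
    have psin: "norm (psi z) < 1" if "norm z < 1" for z
      unfolding psi_def using mobius_norm(2)[OF a, of "phi z"] lt that by auto
    obtain chi where chih: "chi holomorphic_on ball 0 1" and chie: "\<And>z. psi z = z * chi z"
      and chin: "\<And>z. z \<in> ball 0 1 \<Longrightarrow> norm (chi z) \<le> 1"
      using schwarz_factor[OF psih psi0 psin] by metis
    define X where "X = fps_expansion chi 0"
    have hX: "chi has_fps_expansion X" unfolding X_def by (rule holo_fps[OF chih])
    have X0: "X$0 = chi 0" using fps_nth_fps_expansion[OF hX, of 0] by simp
    have X1: "X$1 = deriv chi 0" using fps_nth_fps_expansion[OF hX, of 1] by simp
    have sp: "norm (X$1) \<le> 1 - (norm (X$0))^2" unfolding X0 X1
      by (rule SP0[OF chih]) (use chin in auto)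
    have nX0: "norm (X$0) \<le> 1" unfolding X0 using chin[of 0] by simp
    have ev: "eventually (\<lambda>z. (z * chi z) * (1 - cnj a * phi z) = phi z - a) (nhds 0)"
    proof (rule ev_ballI)
      fix z :: complex assume z: "z \<in> ball 0 1"
      have "psi z * (1 - cnj a * phi z) = phi z - a" unfolding psi_def using den[OF z] by simp
      thus "(z * chi z) * (1 - cnj a * phi z) = phi z - a" using chie[of z] by simp
    qed
    have h1: "(\<lambda>z. (z * chi z) * (1 - cnj a * phi z)) has_fps_expansion (fps_X * X) * (1 - fps_const (cnj a) * P)"
      by (intro fps_expansion_intros hX hP)
    have h2: "(\<lambda>z. phi z - a) has_fps_expansion P - fps_const a"
      by (intro fps_expansion_intros hP)
    have "(\<lambda>z. phi z - a) has_fps_expansion (fps_X * X) * (1 - fps_const (cnj a) * P)"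
      using has_fps_expansion_cong[OF ev refl] h1 by simp
    hence eq: "(fps_X * X) * (1 - fps_const (cnj a) * P) = P - fps_const a"
      using fps_expansion_unique_complex[OF _ h2] by simp
    have aa: "cnj a * a = of_real ((norm a)^2)" using complex_norm_square[of a] by (simp add: mult.commute)
    define k where "k = 1 - (norm a)^2"
    have kk: "1 - cnj a * P$0 = of_real k" using P0 aa by (simp add: a_def k_def)
    have q1: "((fps_X * X) * (1 - fps_const (cnj a) * P))$1 = (P - fps_const a)$1" using eq by simp
    hence "P$1 = X$0 * (1 - cnj a * P$0)" unfolding mult_nth123 by simp
    hence c2: "P$1 = of_real k * X$0" unfolding kk by (simp add: mult.commute)
    have q2: "((fps_X * X) * (1 - fps_const (cnj a) * P))$2 = (P - fps_const a)$2" using eq by simp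
    hence "P$2 = X$0 * (- (cnj a * P$1)) + X$1 * (1 - cnj a * P$0)"
      unfolding mult_nth123 by simp
    hence c3: "P$2 = of_real k * X$1 - cnj a * of_real k * (X$0)^2"
      unfolding c2 kk by (simp add: algebra_simps power2_eq_square)
    have "norm (9/8 * a * P$2 - (P$1)^2 - 7/16 * a^2 * P$1 - 13/256 * a^4) \<le> 1"
      by (rule E_bound[OF a nX0 sp]) (use c2 c3 in \<open>simp_all add: k_def\<close>)
    thus ?thesis using P0 a_def by simp
  qed
qed



lemma H_alg:
  fixes a2 a3 a4 c1 c2 c3 :: complex
  assumes "a2 = (1/2 * c1) / 2" "a3 = (1/2 * c2 + (-1/8) * c1^2) / 3"
    "a4 = (1/2 * c3 + 2 * (-1/8) * c1 * c2 + (-5/48) * c1^3) / 4"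
  shows "(- (1/2) * a2) * (- (1/2) * (a4 - 4 * a2 * a3 + (10/3) * a2^3)) - (- (1/2) * (a3 - (3/2) * a2^2))^2
     = (9/8 * c1 * c3 - c2^2 - 7/16 * c1^2 * c2 - 13/256 * c1^4) / 144"
  unfolding assms by (simp add: field_simps power2_eq_square power3_eq_cube power4_eq_xxxx)

lemma coef_Suc:
  assumes "deriv f has_fps_expansion G"
  shows "coef f (Suc n) = G$n / of_nat (Suc n)"
proof -
  have "(deriv ^^ Suc n) f = (deriv ^^ n) (deriv f)" by (simp only: funpow_Suc_right o_def)
  hence "coef f (Suc n) = (deriv ^^ n) (deriv f) 0 / fact (Suc n)" unfolding coef_def by simp
  also have "(deriv ^^ n) (deriv f) 0 = G$n * fact n" using fps_nth_fps_expansion[OF assms, of n] by simp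
  also have "fact (Suc n) = (of_nat (Suc n) * fact n :: complex)" by (rule fact_Suc)
  also have "G$n * fact n / (of_nat (Suc n) * fact n) = G$n / (of_nat (Suc n) :: complex)"
    by (rule nonzero_mult_divide_mult_cancel_right) simp
  finally show ?thesis .
qed

lemma main_bound:
  assumes f: "f \<in> classBT"
  shows "cmod (H21inv f) \<le> 1/144"
proof -
  obtain w where wh: "w holomorphic_on ball 0 1" and wb: "w ` ball 0 1 \<subseteq> ball 0 1" and w0: "w 0 = 0"
    and wd: "\<forall>z\<in>ball 0 1. deriv f z = Bfun (w z)"
    using f unfolding classBT_def subord_def by blast
  have wn: "norm (w z) < 1" if "norm z < 1" for z
  proof -
    have "z \<in> ball 0 1" using that by simp
    hence "w z \<in> ball 0 1" using wb by blast
    thus ?thesis by simp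
  qed
  obtain phi where ph: "phi holomorphic_on ball 0 1" and pe: "\<And>z. w z = z * phi z"
      and pn: "\<And>z. z \<in> ball 0 1 \<Longrightarrow> norm (phi z) \<le> 1"
    using schwarz_factor[OF wh w0 wn] by metis
  define P where "P = fps_expansion phi 0"
  have hP: "phi has_fps_expansion P" unfolding P_def by (rule holo_fps[OF ph])
  have weq: "w = (\<lambda>z. z * phi z)" using pe by (simp add: fun_eq_iff)
  have hW: "w has_fps_expansion fps_X * P" unfolding weq by (intro fps_expansion_intros hP)
  define Bs where "Bs = fps_expansion Bfun 0"
  note B = Bfun_fps[folded Bs_def]
  have hG: "(Bfun \<circ> w) has_fps_expansion (Bs oo (fps_X * P))"
    by (rule has_fps_expansion_compose[OF B(1) hW]) simp
  have ev: "eventually (\<lambda>z. (Bfun \<circ> w) z = deriv f z) (nhds 0)"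
    by (rule ev_ballI) (use wd in simp)
  have hD: "deriv f has_fps_expansion (Bs oo (fps_X * P))"
    using has_fps_expansion_cong[OF ev refl] hG by (simp add: o_def)
  define G where "G = Bs oo (fps_X * P)"
  have W0: "(fps_X * P)$0 = 0" by simp
  note cG = compose_nth123[OF W0, of Bs, folded G_def]
  have Wn: "(fps_X * P)$1 = P$0" "(fps_X * P)$2 = P$1" "(fps_X * P)$3 = P$2" by simp_all
  have a2: "coef f 2 = (1/2 * P$0) / 2"
  proof -
    have "coef f 2 = G$1 / of_nat 2" using coef_Suc[OF hD[folded G_def], of 1] by (simp add: eval_nat_numeral)
    thus ?thesis unfolding cG(1) Wn B by simp
  qed
  have a3: "coef f 3 = (1/2 * P$1 + (-1/8) * (P$0)^2) / 3"
  proof -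
    have "coef f 3 = G$2 / of_nat 3" using coef_Suc[OF hD[folded G_def], of 2] by (simp add: eval_nat_numeral)
    thus ?thesis unfolding cG(2) Wn B by simp
  qed
  have a4: "coef f 4 = (1/2 * P$2 + 2 * (-1/8) * P$0 * P$1 + (-5/48) * (P$0)^3) / 4"
  proof -
    have "coef f 4 = G$3 / of_nat 4" using coef_Suc[OF hD[folded G_def], of 3] by (simp add: eval_nat_numeral)
    thus ?thesis unfolding cG(3) Wn B by simp
  qed
  define E where "E = 9/8 * P$0 * P$2 - (P$1)^2 - 7/16 * (P$0)^2 * P$1 - 13/256 * (P$0)^4"
  have Hf: "H21inv f = E / 144"
    unfolding H21inv_def Gamma1_def Gamma2_def Gamma3_def E_def by (rule H_alg[OF a2 a3 a4])
  have nE: "norm E \<le> 1"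
    unfolding P_def E_def by (rule schur_bound[OF ph]) (use pn in auto)
  have "norm (H21inv f) = norm E / 144" unfolding Hf by (simp add: norm_divide)
  thus ?thesis using nE by simp
qed



definition hh :: "complex \<Rightarrow> complex" where "hh t = Bfun (t^2)"

lemma sq_ball: "z \<in> ball 0 1 \<Longrightarrow> z^2 \<in> ball (0::complex) 1"
  by (simp add: norm_power power_less_one_iff abs_square_less_1)

lemma hh_holo: "hh holomorphic_on ball 0 1"
proof -
  have "(\<lambda>t. Bfun (t^2)) = Bfun \<circ> (\<lambda>t. t^2)" by (simp add: o_def)
  moreover have "(Bfun \<circ> (\<lambda>t. t^2)) holomorphic_on ball 0 1"
    by (rule holomorphic_on_compose_gen[OF _ Bfun_holo]) (use sq_ball in \<open>auto intro!: holomorphic_intros\<close>)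
  ultimately show ?thesis unfolding hh_def[abs_def] by simp
qed

lemma hh_Re: "z \<in> ball 0 1 \<Longrightarrow> Re (hh z) > 0"
  unfolding hh_def using Bfun_Re_pos sq_ball by simp

lemma f2_deriv: "z \<in> ball 0 1 \<Longrightarrow> (f2 has_field_derivative hh z) (at z)"
proof -
  obtain g where g: "\<And>x. x \<in> ball 0 1 \<Longrightarrow> (g has_field_derivative hh x) (at x within ball 0 1)"
    using holomorphic_convex_primitive'[OF convex_ball open_ball hh_holo] by metis
  have f2g: "f2 x = g x - g 0" if x: "x \<in> ball 0 1" for x
  proof -
    have "closed_segment 0 x \<subseteq> ball 0 1" by (rule closed_segment_subset) (use x in auto)
    hence "(hh has_contour_integral (g (pathfinish (linepath 0 x)) - g (pathstart (linepath 0 x)))) (linepath 0 x)"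
      by (intro contour_integral_primitive[OF g]) auto
    hence "contour_integral (linepath 0 x) hh = g x - g 0" by (simp add: contour_integral_unique)
    thus ?thesis unfolding f2_def hh_def[abs_def] by simp
  qed
  assume z: "z \<in> ball 0 1"
  have "((\<lambda>x. g x - g 0) has_field_derivative hh z) (at z)"
    using g[OF z] z by (auto intro!: derivative_eq_intros simp: at_within_open[OF _ open_ball])
  thus ?thesis by (rule has_field_derivative_transform_within_open[OF _ open_ball z]) (use f2g in simp)
qed

lemma f2_0: "f2 0 = 0"
  unfolding f2_def by simp

lemma f2_holo: "f2 holomorphic_on ball 0 1"
  unfolding holomorphic_on_open[OF open_ball] using f2_deriv by blast

lemma deriv_f2: "z \<in> ball 0 1 \<Longrightarrow> deriv f2 z = hh z"
  using f2_deriv DERIV_imp_deriv by blast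

lemma f2_inj: "inj_on f2 (ball 0 1)"
proof (rule inj_onI, rule ccontr)
  fix z w assume z: "z \<in> ball 0 1" and w: "w \<in> ball 0 1" and eq: "f2 z = f2 w" and ne: "z \<noteq> w"
  have seg: "closed_segment z w \<subseteq> ball 0 1" by (rule closed_segment_subset) (use z w in auto)
  have "(hh has_contour_integral (f2 (pathfinish (linepath z w)) - f2 (pathstart (linepath z w)))) (linepath z w)"
    by (rule contour_integral_primitive) (use seg f2_deriv in \<open>auto intro: has_field_derivative_at_within\<close>)
  hence "(hh has_contour_integral 0) (linepath z w)" using eq by simp
  hence "((\<lambda>t. hh (linepath z w t) * (w - z)) has_integral 0) {0..1}"
    by (simp add: has_contour_integral_linepath)
  hence "((\<lambda>t. inverse (w - z) * (hh (linepath z w t) * (w - z))) has_integral (inverse (w - z) * 0)) {0..1}"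
    by (rule has_integral_mult_right)
  moreover have "(\<lambda>t. inverse (w - z) * (hh (linepath z w t) * (w - z))) = (\<lambda>t. hh (linepath z w t))"
    using ne by (simp add: fun_eq_iff field_simps)
  ultimately have "((\<lambda>t. hh (linepath z w t)) has_integral 0) {0..1}" by simp
  hence I0: "((\<lambda>t. Re (hh (linepath z w t))) has_integral Re 0) {0..1}"
    by (rule has_integral_Re)
  have I: "((\<lambda>t. Re (hh (linepath z w t))) has_integral 0) (cbox 0 1)"
    using I0 by (simp add: cbox_interval)
  have lin: "linepath z w t \<in> ball 0 1" if "t \<in> {0..1}" for t
    using seg linepath_image_01[of z w] that by blast
  have cont: "continuous_on (cbox 0 1) (\<lambda>t. Re (hh (linepath z w t)))"
  proof -
    have "continuous_on {0..1} (hh \<circ> linepath z w)"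
    proof (rule continuous_on_compose)
      show "continuous_on {0..1} (linepath z w)" by (rule continuous_on_linepath)
      have "linepath z w ` {0..1} \<subseteq> ball 0 1" using lin by blast
      thus "continuous_on (linepath z w ` {0..1}) hh"
        by (rule continuous_on_subset[OF holomorphic_on_imp_continuous_on[OF hh_holo]])
    qed
    from continuous_on_Re[OF this] show ?thesis by (simp add: cbox_interval o_def)
  qed
  have "Re (hh (linepath z w 0)) = 0"
  proof (rule has_integral_0_cbox_imp_0[OF cont _ I])
    fix t :: real assume "t \<in> box 0 1"
    hence "t \<in> {0..1}" by (simp add: box_real)
    thus "0 \<le> Re (hh (linepath z w t))" using lin hh_Re less_imp_le by blast
  next
    show "box 0 (1::real) \<noteq> {}" by (simp add: box_real)
    show "(0::real) \<in> cbox 0 1" by (simp add: cbox_interval)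
  qed
  thus False using hh_Re[OF z] by (simp add: linepath_def)
qed



lemma f2_classS: "f2 \<in> classS"
  unfolding classS_def using f2_holo f2_inj f2_0 deriv_f2[of 0] by (simp add: hh_def Bfun_0)

lemma f2_classBT: "f2 \<in> classBT"
proof -
  have "subord (deriv f2) Bfun"
    unfolding subord_def
  proof (intro exI[of _ "\<lambda>z. z^2"] conjI)
    show "(\<lambda>z::complex. z^2) holomorphic_on ball 0 1" by (intro holomorphic_intros)
    show "(\<lambda>z::complex. z^2) ` ball 0 1 \<subseteq> ball 0 1" using sq_ball by blast
    show "(0::complex)^2 = 0" by simp
    show "\<forall>z\<in>ball 0 1. deriv f2 z = Bfun (z^2)" using deriv_f2 by (simp add: hh_def)
  qed
  thus ?thesis unfolding classBT_def using f2_classS by simp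
qed

lemma H_f2: "H21inv f2 = - 1/144"
proof -
  define Bs where "Bs = fps_expansion Bfun 0"
  note B = Bfun_fps[folded Bs_def]
  have hG: "(Bfun \<circ> (\<lambda>z. z^2)) has_fps_expansion (Bs oo fps_X^2)"
    by (rule has_fps_expansion_compose[OF B(1) has_fps_expansion_fps_X_power]) simp
  have ev: "eventually (\<lambda>z. (Bfun \<circ> (\<lambda>z. z^2)) z = deriv f2 z) (nhds 0)"
    by (rule ev_ballI) (simp add: deriv_f2 hh_def)
  have hD: "deriv f2 has_fps_expansion (Bs oo fps_X^2)"
    using has_fps_expansion_cong[OF ev refl, THEN iffD1, OF hG] .
  define G where "G = Bs oo (fps_X^2 :: complex fps)"
  have W0: "(fps_X^2 :: complex fps)$0 = 0" by simp
  note cG = compose_nth123[OF W0, of Bs, folded G_def]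
  have a2: "coef f2 2 = 0"
  proof -
    have "coef f2 2 = G$1 / of_nat 2" using coef_Suc[OF hD[folded G_def], of 1] by (simp add: eval_nat_numeral)
    thus ?thesis unfolding cG(1) by simp
  qed
  have a3: "coef f2 3 = 1/6"
  proof -
    have "coef f2 3 = G$2 / of_nat 3" using coef_Suc[OF hD[folded G_def], of 2] by (simp add: eval_nat_numeral)
    thus ?thesis unfolding cG(2) B by simp
  qed
  show ?thesis unfolding H21inv_def Gamma1_def Gamma2_def Gamma3_def a2 a3 by (simp add: power2_eq_square)
qed

theorem theorem4p2:
  shows "(\<forall>f \<in> classBT. cmod (H21inv f) \<le> 1/144)
         \<and> f2 \<in> classBT \<and> cmod (H21inv f2) = 1/144"
  using main_bound f2_classBT H_f2 by simp


end
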